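(* Let $m$ be a positive integer, $c$ a nonnegative integer, and $f(x)=x(e^{mx}+c)$ for $x>0$. For each positive integer $n$ and each $i\in\{0,1,2\}$, let $t_i=t_i(n)$ be the unique positive number with $f(t_i)=n+i$. Then, as $n\to\infty$, \begin{align*} t_1-t_0&=\frac{1}{mn}-\frac{1}{m^2nt_0}+O\Bigl(\frac{1}{n\log^2 n}\Bigr),\\ t_2-t_1&=\frac{1}{mn}-\frac{1}{m^2nt_0}+O\Bigl(\frac{1}{n\log^2 n}\Bigr),\\ 2t_1-t_0-t_2&=\frac{1}{mn^2}+O\Bigl(\frac{1}{n^2\log n}\Bigr),\\ \frac1{t_0}+\frac1{t_2}-\frac{2}{t_1}&=O\Bigl(\frac{1}{n^2\log^2 n}\Bigr). \end{align*} *)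

theory Defs
  imports Complex_Main "HOL-Library.Landau_Symbols"
begin

definition ff :: "nat \<Rightarrow> nat \<Rightarrow> real \<Rightarrow> real" where
  "ff m c x = x * (exp (real m * x) + real c)"

definition tt :: "nat \<Rightarrow> nat \<Rightarrow> nat \<Rightarrow> nat \<Rightarrow> real" where
  "tt m c i n = (THE t. t > 0 \<and> ff m c t = real n + real i)"

end

theory Submission
  imports Defs "HOL-Real_Asymp.Real_Asymp"
begin

definition FF :: "real \<Rightarrow> real \<Rightarrow> real" where "FF cc s = s*(exp s + cc)"
definition P1 :: "real \<Rightarrow> real \<Rightarrow> real" where "P1 cc s = exp s*(1+s)+cc"
definition P2 :: "real \<Rightarrow> real" where "P2 s = exp s*(2+s)"

definition gi :: "nat \<Rightarrow> nat \<Rightarrow> real \<Rightarrow> real" where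
  "gi m c y = (THE t. t > 0 \<and> ff m c t = y)"

lemma tt_gi: "tt m c i n = gi m c (real n + real i)"
  unfolding tt_def gi_def by simp

lemma second_diff:
  fixes \<phi> \<phi>1 \<phi>2 :: "real \<Rightarrow> real"
  assumes d1: "\<And>z. x \<le> z \<Longrightarrow> z \<le> x+2 \<Longrightarrow> DERIV \<phi> z :> \<phi>1 z"
      and d2: "\<And>z. x \<le> z \<Longrightarrow> z \<le> x+2 \<Longrightarrow> DERIV \<phi>1 z :> \<phi>2 z"
  shows "\<exists>\<xi>. x < \<xi> \<and> \<xi> < x+2 \<and> \<phi>(x+2) - 2*\<phi>(x+1) + \<phi> x = \<phi>2 \<xi>"
proof -
  have "\<exists>\<eta>. x < \<eta> \<and> \<eta> < x+1 \<and> (\<phi>((x+1)+1) - \<phi>(x+1)) - (\<phi>(x+1) - \<phi> x) = ((x+1) - x) * (\<phi>1 (\<eta>+1) - \<phi>1 \<eta>)"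
  proof (rule MVT2[where f = "\<lambda>z. \<phi>(z+1) - \<phi> z"])
    fix z assume "x \<le> z" "z \<le> x+1"
    then show "DERIV (\<lambda>z. \<phi>(z+1) - \<phi> z) z :> \<phi>1 (z+1) - \<phi>1 z"
    proof -
      have d: "DERIV \<phi> (z+1) :> \<phi>1 (z+1)" using d1[of "z+1"] \<open>x \<le> z\<close> \<open>z \<le> x+1\<close> by auto
      have e: "DERIV (\<lambda>z. z+1) z :> 1" by (auto intro!: derivative_eq_intros)
      have a: "DERIV (\<lambda>z. \<phi>(z+1)) z :> \<phi>1 (z+1)"
        using DERIV_chain2[OF d e] by simp
      show ?thesis using DERIV_diff[OF a d1[of z]] \<open>x \<le> z\<close> \<open>z \<le> x+1\<close> by auto
    qed
  qed simp
  then obtain \<eta> where e: "x < \<eta>" "\<eta> < x+1" "\<phi>(x+2) - 2*\<phi>(x+1) + \<phi> x = \<phi>1 (\<eta>+1) - \<phi>1 \<eta>"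
    by (auto simp: algebra_simps)
  have "\<exists>\<xi>. \<eta> < \<xi> \<and> \<xi> < \<eta>+1 \<and> \<phi>1 (\<eta>+1) - \<phi>1 \<eta> = ((\<eta>+1) - \<eta>) * \<phi>2 \<xi>"
    by (rule MVT2) (use e in \<open>auto intro!: d2\<close>)
  then obtain \<xi> where "\<eta> < \<xi>" "\<xi> < \<eta>+1" "\<phi>1 (\<eta>+1) - \<phi>1 \<eta> = \<phi>2 \<xi>" by auto
  then show ?thesis using e by (intro exI[of _ \<xi>]) auto
qed

context
  fixes m c :: nat
  assumes m: "m > 0"
begin

lemma ff_mono: assumes "0 \<le> a" "a < b" shows "ff m c a < ff m c b"
proof -
  have "exp (real m * a) \<le> exp (real m * b)" using assms by (simp add: mult_left_mono)
  hence "a*(exp (real m*a) + c) \<le> a*(exp (real m*b)+c)" using assms by (simp add: mult_left_mono)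
  also have "\<dots> < b*(exp (real m*b)+c)" using assms
    by (intro mult_strict_right_mono) (auto intro: add_pos_nonneg)
  finally show ?thesis unfolding ff_def .
qed

lemma ff_ge: "t \<ge> 0 \<Longrightarrow> ff m c t \<ge> t"
proof -
  assume t: "t \<ge> 0"
  have "1 \<le> exp (real m * t) + c" using t by (smt (verit) of_nat_0_le_iff one_le_exp_iff zero_le_mult_iff)
  hence "t*1 \<le> t*(exp (real m*t)+c)" using t by (intro mult_left_mono) auto
  thus ?thesis by (simp add: ff_def)
qed

lemma ff_0: "ff m c 0 = 0" by (simp add: ff_def)

lemma ff_F: "ff m c (t::real) = FF c (real m*t) / real m"
  using m by (simp add: ff_def FF_def)

lemma ff_deriv: "DERIV (ff m c) (t::real) :> P1 c (real m*t)"
  unfolding ff_def[abs_def] P1_def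
  by (rule derivative_eq_intros refl)+ (simp add: algebra_simps)

lemma ff_cont: "isCont (ff m c) t"
  using ff_deriv DERIV_isCont by blast

lemma ex1: assumes "y > 0" shows "\<exists>!t. t > 0 \<and> ff m c t = y"
proof -
  have "\<exists>t\<ge>0. t \<le> y \<and> ff m c t = y"
    by (rule IVT) (use assms ff_ge[of y] ff_0 ff_cont in auto)
  then obtain t where t: "t \<ge> 0" "ff m c t = y" by auto
  with assms ff_0 have "t > 0" by (cases "t = 0") auto
  moreover have "t' = t" if "t' > 0" "ff m c t' = y" for t'
    using ff_mono[of t t'] ff_mono[of t' t] that t by (cases t t' rule: linorder_cases) auto
  ultimately show ?thesis using t by blast
qed

lemma gi: assumes "y > 0" shows "gi m c y > 0" "ff m c (gi m c y) = y"
  using theI'[OF ex1[OF assms]] unfolding gi_def by auto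

lemma gi_ff: assumes "t > 0" shows "gi m c (ff m c t) = t"
proof -
  have "ff m c t > 0" using ff_ge[of t] assms by auto
  from ex1[OF this] assms show ?thesis unfolding gi_def by (intro the1_equality) auto
qed

lemma gi_mono: assumes "0 < x" "x \<le> y" shows "gi m c x \<le> gi m c y"
proof (rule ccontr)
  assume "\<not> ?thesis"
  hence "ff m c (gi m c y) < ff m c (gi m c x)" using gi(1)[of y] assms by (intro ff_mono) auto
  thus False using gi(2)[of x] gi(2)[of y] assms by auto
qed

lemma F_gi: assumes "(y::real) > 0" shows "FF c (real m * gi m c y) = real m * y"
  using gi(2)[OF assms] ff_F[of "gi m c y"] m by (simp add: field_simps)

lemma P1_pos: "s \<ge> 0 \<Longrightarrow> P1 c s > 0"
  unfolding P1_def by (smt (verit) exp_gt_zero mult_pos_pos of_nat_0_le_iff)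

lemma gi_cont: assumes "y > 0" shows "isCont (gi m c) y"
proof -
  let ?t = "gi m c y"
  have t: "?t > 0" using gi[OF assms] by auto
  have "isCont (gi m c) (ff m c ?t)"
    by (rule isCont_inverse_function2[where a="?t/2" and b="?t+1"]) (use t gi_ff ff_cont in auto)
  thus ?thesis using gi(2)[OF assms] by simp
qed

lemma gi_deriv: assumes "y > 0" shows "DERIV (gi m c) y :> 1 / P1 c (m * gi m c y)"
proof -
  have t: "gi m c y > 0" using gi[OF assms] by auto
  have p: "P1 c (m * gi m c y) > 0" using P1_pos[of "m * gi m c y"] t by simp
  have "DERIV (gi m c) y :> inverse (P1 c (m * gi m c y))"
    by (rule DERIV_inverse_function[where f="ff m c" and a=0 and b="y+1"])
       (use assms t ff_deriv p gi gi_cont in auto)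
  thus ?thesis by (simp add: divide_inverse)
qed

end

lemma asymA: assumes "cc \<ge> 0" shows "(\<lambda>s. 1/P1 cc s - 1/FF cc s + 1/(s*FF cc s)) \<in> O(\<lambda>s. 1/(FF cc s * s^2))"
  unfolding P1_def FF_def using assms by real_asymp
lemma asymB: assumes "cc \<ge> 0" shows "(\<lambda>s. - P2 s/P1 cc s^3 + 1/FF cc s^2) \<in> O(\<lambda>s. 1/(FF cc s^2 * s))"
  unfolding P1_def P2_def FF_def using assms by real_asymp
lemma asymH: assumes "cc \<ge> 0" shows "(\<lambda>s. P2 s/(P1 cc s^3*s^2) + 2/(P1 cc s^2*s^3)) \<in> O(\<lambda>s. 1/(FF cc s^2 * s^2))"
  unfolding P1_def P2_def FF_def using assms by real_asymp
lemma asymP: assumes "cc \<ge> 0" shows "(\<lambda>s. 1/(FF cc s^2*s) + 1/(P1 cc s*FF cc s*s^2)) \<in> O(\<lambda>s. 1/(FF cc s^2))"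
  unfolding P1_def FF_def using assms by real_asymp
lemma asymL: assumes "cc \<ge> 0" shows "(\<lambda>s. ln (FF cc s)) \<in> O(\<lambda>s. s)"
  unfolding FF_def using assms by real_asymp

definition "D1 m c y = 1 / P1 c (real m * gi m c y)"
definition "D2 m c y = -(real m * P2 (real m * gi m c y)) / P1 c (real m * gi m c y)^3"
definition "H1 m c y = - D1 m c y / gi m c y ^ 2"
definition "H2 m c y = - D2 m c y / gi m c y ^ 2 + 2 * D1 m c y ^ 2 / gi m c y ^ 3"
definition "Phi m c y = 1 / (y * gi m c y)"
definition "Phi1 m c y = - 1 / (y^2 * gi m c y) - D1 m c y / (y * gi m c y ^ 2)"

context
  fixes m c :: nat
  assumes m: "m > 0"
begin

lemma D1_deriv: assumes "(y::real) > 0" shows "DERIV (D1 m c) y :> D2 m c y"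
proof -
  let ?s = "real m * gi m c y"
  have t: "gi m c y > 0" using gi[OF m assms] by auto
  have p: "P1 c ?s > 0" using P1_pos[OF m, of ?s] t by simp
  define D where "D = 1 / P1 c ?s"
  have g: "DERIV (gi m c) y :> D" using gi_deriv[OF m assms] unfolding D_def .
  have d0: "DERIV (\<lambda>y. P1 c (real m * gi m c y)) y :> P2 ?s * (real m * D)"
    unfolding P1_def P2_def
    by (rule derivative_eq_intros g refl)+ (simp add: algebra_simps)
  have d: "DERIV (\<lambda>y. P1 c (real m * gi m c y)) y :> P2 ?s * (real m * (1 / P1 c ?s))"
    using d0 unfolding D_def .
  have "DERIV (\<lambda>y. inverse (P1 c (real m * gi m c y))) y :>
          - ((P2 ?s * (real m * (1 / P1 c ?s))) * inverse (P1 c ?s ^ Suc (Suc 0)))"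
    by (rule DERIV_inverse_fun[OF d]) (use p in auto)
  moreover have "- ((P2 ?s * (real m * (1 / P1 c ?s))) * inverse (P1 c ?s ^ Suc (Suc 0))) = D2 m c y"
    unfolding D2_def using p by (simp add: field_simps power3_eq_cube)
  ultimately show ?thesis unfolding D1_def[abs_def] by (simp add: divide_inverse)
qed

lemma gi_deriv': assumes "(y::real) > 0" shows "DERIV (gi m c) y :> D1 m c y"
  using gi_deriv[OF m assms] unfolding D1_def .

lemma H_deriv: assumes "(y::real) > 0" shows "DERIV (\<lambda>y. 1 / gi m c y) y :> H1 m c y"
proof -
  have t: "gi m c y > 0" using gi[OF m assms] by auto
  have "DERIV (\<lambda>y. inverse (gi m c y)) y :> - (D1 m c y * inverse (gi m c y ^ Suc (Suc 0)))"
    by (rule DERIV_inverse_fun[OF gi_deriv'[OF assms]]) (use t in auto)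
  thus ?thesis unfolding H1_def by (simp add: divide_inverse power2_eq_square)
qed

lemma H1_deriv: assumes "(y::real) > 0" shows "DERIV (H1 m c) y :> H2 m c y"
proof -
  have t: "gi m c y > 0" using gi[OF m assms] by auto
  have "DERIV (\<lambda>y. - D1 m c y / gi m c y ^ 2) y :>
     (- D2 m c y * gi m c y ^ 2 - (- D1 m c y) * (2 * gi m c y * D1 m c y)) / (gi m c y ^ 2)^2"
    by (rule derivative_eq_intros D1_deriv[OF assms] gi_deriv'[OF assms] refl)+
       (use t in \<open>auto simp: algebra_simps\<close>)
  moreover have "(- D2 m c y * gi m c y ^ 2 - (- D1 m c y) * (2 * gi m c y * D1 m c y)) / (gi m c y ^ 2)^2
     = H2 m c y" unfolding H2_def using t by (simp add: field_simps power2_eq_square power3_eq_cube)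
  ultimately show ?thesis unfolding H1_def[abs_def] by simp
qed

lemma Phi_deriv: assumes "(y::real) > 0" shows "DERIV (Phi m c) y :> Phi1 m c y"
proof -
  have t: "gi m c y > 0" using gi[OF m assms] by auto
  have "DERIV (\<lambda>y. inverse (y * gi m c y)) y :>
      - ((1 * gi m c y + y * D1 m c y) * inverse ((y * gi m c y) ^ Suc (Suc 0)))"
    by (rule DERIV_inverse_fun) (use t assms in \<open>auto intro!: derivative_eq_intros gi_deriv'[OF assms]\<close>)
  moreover have "- ((1 * gi m c y + y * D1 m c y) * inverse ((y * gi m c y) ^ Suc (Suc 0))) = Phi1 m c y"
    unfolding Phi1_def using t assms by (simp add: field_simps power2_eq_square)
  ultimately show ?thesis unfolding Phi_def[abs_def] by (simp add: divide_inverse)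
qed

end

context
  fixes m c :: nat
  assumes m: "m > 0"
begin

lemma transfer:
  fixes Qs Bs :: "real \<Rightarrow> real"
  assumes "Qs \<in> O(Bs)"
  obtains K Y where "K > 0" "Y > 0"
    "\<And>y. y \<ge> Y \<Longrightarrow> \<bar>Qs (real m * gi m c y)\<bar> \<le> K * \<bar>Bs (real m * gi m c y)\<bar>"
    "\<And>y. y \<ge> Y \<Longrightarrow> real m * gi m c y \<ge> 1"
proof -
  obtain K where K: "K > 0" "eventually (\<lambda>x. norm (Qs x) \<le> K * norm (Bs x)) at_top"
    using landau_o.bigE[OF assms] by blast
  then obtain N where N: "\<And>x. x \<ge> N \<Longrightarrow> \<bar>Qs x\<bar> \<le> K * \<bar>Bs x\<bar>"
    by (auto simp: eventually_at_top_linorder)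
  define S where "S = max N 1"
  define Y where "Y = ff m c (S / m)"
  have Sp: "S / m > 0" using m by (simp add: S_def)
  have Y: "Y > 0" using ff_ge[OF m, where c=c and t="S/m"] Sp unfolding Y_def by linarith
  have gY: "gi m c Y = S / m" unfolding Y_def by (rule gi_ff[OF m Sp])
  have s: "real m * gi m c y \<ge> S" if "y \<ge> Y" for y
  proof -
    have "gi m c y \<ge> S/m" using gi_mono[OF m Y that, where c=c] gY by simp
    thus ?thesis using m by (simp add: field_simps)
  qed
  show ?thesis
  proof (rule that[OF K(1) Y])
    fix y assume "y \<ge> Y"
    with s[OF this] show "\<bar>Qs (real m * gi m c y)\<bar> \<le> K * \<bar>Bs (real m * gi m c y)\<bar>"
      "real m * gi m c y \<ge> 1" by (auto intro!: N simp: S_def)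
  qed
qed

lemma sy: assumes "(y::real) > 0"
  shows "FF c (real m * gi m c y) = real m * y" "gi m c y = (real m * gi m c y) / real m"
        "y = FF c (real m * gi m c y) / real m"
  using F_gi[OF m assms] m by auto

lemma EA: obtains K Y where "K > 0" "Y > 0"
  "\<And>y. y \<ge> Y \<Longrightarrow> \<bar>D1 m c y - 1/(real m * y) + 1/((real m)^2 * y * gi m c y)\<bar> \<le> K / (y * (real m * gi m c y)^2)"
  "\<And>y. y \<ge> Y \<Longrightarrow> real m * gi m c y \<ge> 1"
proof -
  obtain K Y where KY: "K > 0" "Y > 0"
    "\<And>y. y \<ge> Y \<Longrightarrow> \<bar>(\<lambda>s. 1/P1 c s - 1/FF c s + 1/(s*FF c s)) (real m * gi m c y)\<bar>
        \<le> K * \<bar>(\<lambda>s. 1/(FF c s * s^2)) (real m * gi m c y)\<bar>"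
    "\<And>y. y \<ge> Y \<Longrightarrow> real m * gi m c y \<ge> 1"
    using transfer[OF asymA[of "real c"]] by auto
  show ?thesis
  proof (rule that[OF KY(1,2) _ KY(4)])
    fix y assume y: "y \<ge> Y"
    define s where "s = real m * gi m c y"
    have s1: "s \<ge> 1" using KY(4)[OF y] s_def by simp
    have yp: "y > 0" using y KY(2) by simp
    have F: "FF c s = real m * y" using sy(1)[OF yp] s_def by simp
    have d: "D1 m c y = 1/P1 c s" by (simp add: D1_def s_def)
    have gy: "gi m c y = s / m" using m by (simp add: s_def)
    have yF: "y = FF c s / m" using F m by simp
    have Fp: "FF c s > 0" using F m yp by simp
    have e1: "D1 m c y - 1/(real m * y) + 1/((real m)^2 * y * gi m c y) = 1/P1 c s - 1/FF c s + 1/(s*FF c s)"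
      unfolding d gy using m s1 Fp by (subst yF)+ (simp add: field_simps power2_eq_square)
    have e2: "\<bar>1/(FF c s * s^2)\<bar> = 1/(real m * y * s^2)" using F yp m s1 by simp
    have "\<bar>D1 m c y - 1/(real m * y) + 1/((real m)^2 * y * gi m c y)\<bar> \<le> K / (real m * y * s^2)"
      using KY(3)[OF y] e1 e2 unfolding s_def by simp
    also have "\<dots> \<le> K / (y * s^2)" using m yp s1 KY(1)
      by (intro divide_left_mono) (auto intro!: mult_pos_pos)
    finally show "\<bar>D1 m c y - 1/(real m * y) + 1/((real m)^2 * y * gi m c y)\<bar> \<le> K / (y * (real m * gi m c y)^2)"
      unfolding s_def .
  qed
qed

lemma EB: obtains K Y where "K > 0" "Y > 0"
  "\<And>y. y \<ge> Y \<Longrightarrow> \<bar>D2 m c y + 1/(real m * y^2)\<bar> \<le> K / (y^2 * (real m * gi m c y))"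
  "\<And>y. y \<ge> Y \<Longrightarrow> real m * gi m c y \<ge> 1"
proof -
  obtain K Y where KY: "K > 0" "Y > 0"
    "\<And>y. y \<ge> Y \<Longrightarrow> \<bar>(\<lambda>s. - P2 s/P1 c s^3 + 1/FF c s^2) (real m * gi m c y)\<bar>
        \<le> K * \<bar>(\<lambda>s. 1/(FF c s^2 * s)) (real m * gi m c y)\<bar>"
    "\<And>y. y \<ge> Y \<Longrightarrow> real m * gi m c y \<ge> 1"
    using transfer[OF asymB[of "real c"]] by auto
  show ?thesis
  proof (rule that[OF KY(1,2) _ KY(4)])
    fix y assume y: "y \<ge> Y"
    define s where "s = real m * gi m c y"
    have s1: "s \<ge> 1" using KY(4)[OF y] s_def by simp
    have yp: "y > 0" using y KY(2) by simp
    have F: "FF c s = real m * y" using sy(1)[OF yp] s_def by simp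
    have d: "D1 m c y = 1/P1 c s" by (simp add: D1_def s_def)
    have d2: "D2 m c y = -(real m * P2 s)/P1 c s^3" by (simp add: D2_def s_def)
    have gy: "gi m c y = s / m" using m by (simp add: s_def)
    have yF: "y = FF c s / m" using F m by simp
    have Fp: "FF c s > 0" using F m yp by simp
    have Pp: "P1 c s > 0" using P1_pos[OF m, of s] s1 by simp
    have e1: "D2 m c y + 1/(real m * y^2) = real m * (- P2 s/P1 c s^3 + 1/FF c s^2)"
      unfolding d2 using m s1 Fp Pp by (subst yF)+ (simp add: field_simps power2_eq_square)
    have e2: "\<bar>1/(FF c s^2 * s)\<bar> = 1/((real m * y)^2 * s)" using F yp m s1 by simp
    have q: "\<bar>- P2 s/P1 c s^3 + 1/FF c s^2\<bar> \<le> K * \<bar>1/(FF c s^2 * s)\<bar>" using KY(3)[OF y] unfolding s_def by simp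
    have "\<bar>D2 m c y + 1/(real m * y^2)\<bar> = real m * \<bar>- P2 s/P1 c s^3 + 1/FF c s^2\<bar>" using e1 by (simp add: abs_mult)
    also have "\<dots> \<le> real m * (K * \<bar>1/(FF c s^2 * s)\<bar>)" by (rule mult_left_mono[OF q]) simp
    also have "\<dots> = real m * (K / ((real m * y)^2 * s))" using e2 by simp
    also have "\<dots> = K / (real m * (y^2 * s))" using m by (simp add: power2_eq_square)
    also have "\<dots> \<le> K / (y^2 * s)" using m yp s1 KY(1)
      by (intro divide_left_mono) (auto intro!: mult_pos_pos)
    finally show "\<bar>D2 m c y + 1/(real m * y^2)\<bar> \<le> K / (y^2 * (real m * gi m c y))"
      unfolding s_def .
  qed
qed

lemma EH: obtains K Y where "K > 0" "Y > 0"
  "\<And>y. y \<ge> Y \<Longrightarrow> \<bar>H2 m c y\<bar> \<le> K / (y^2 * (real m * gi m c y)^2)"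
  "\<And>y. y \<ge> Y \<Longrightarrow> real m * gi m c y \<ge> 1"
proof -
  obtain K Y where KY: "K > 0" "Y > 0"
    "\<And>y. y \<ge> Y \<Longrightarrow> \<bar>(\<lambda>s. P2 s/(P1 c s^3*s^2) + 2/(P1 c s^2*s^3)) (real m * gi m c y)\<bar>
        \<le> K * \<bar>(\<lambda>s. 1/(FF c s^2 * s^2)) (real m * gi m c y)\<bar>"
    "\<And>y. y \<ge> Y \<Longrightarrow> real m * gi m c y \<ge> 1"
    using transfer[OF asymH[of "real c"]] by auto
  show ?thesis
  proof (rule that[of "real m * K", OF _ KY(2) _ KY(4)])
    show "real m * K > 0" using m KY(1) by simp
    fix y assume y: "y \<ge> Y"
    define s where "s = real m * gi m c y"
    have s1: "s \<ge> 1" using KY(4)[OF y] s_def by simp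
    have yp: "y > 0" using y KY(2) by simp
    have F: "FF c s = real m * y" using sy(1)[OF yp] s_def by simp
    have d: "D1 m c y = 1/P1 c s" by (simp add: D1_def s_def)
    have d2: "D2 m c y = -(real m * P2 s)/P1 c s^3" by (simp add: D2_def s_def)
    have gy: "gi m c y = s / m" using m by (simp add: s_def)
    have yF: "y = FF c s / m" using F m by simp
    have Fp: "FF c s > 0" using F m yp by simp
    have Pp: "P1 c s > 0" using P1_pos[OF m, of s] s1 by simp
    have e1: "H2 m c y = real m ^ 3 * (P2 s/(P1 c s^3*s^2) + 2/(P1 c s^2*s^3))"
      unfolding H2_def d d2 gy using m s1 Fp Pp by (simp add: field_simps power2_eq_square power3_eq_cube)
    have e2: "\<bar>1/(FF c s^2 * s^2)\<bar> = 1/((real m * y)^2 * s^2)" using F yp m s1 by simp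
    have q: "\<bar>P2 s/(P1 c s^3*s^2) + 2/(P1 c s^2*s^3)\<bar> \<le> K * \<bar>1/(FF c s^2 * s^2)\<bar>" using KY(3)[OF y] unfolding s_def by simp
    have "\<bar>H2 m c y\<bar> = real m ^ 3 * \<bar>P2 s/(P1 c s^3*s^2) + 2/(P1 c s^2*s^3)\<bar>" using e1 by (simp add: abs_mult)
    also have "\<dots> \<le> real m ^ 3 * (K * \<bar>1/(FF c s^2 * s^2)\<bar>)" by (rule mult_left_mono[OF q]) simp
    also have "\<dots> = real m ^ 3 * (K / ((real m * y)^2 * s^2))" using e2 by simp
    also have "\<dots> = real m * K / (y^2 * s^2)" using m by (simp add: power2_eq_square power3_eq_cube)
    finally show "\<bar>H2 m c y\<bar> \<le> real m * K / (y^2 * (real m * gi m c y)^2)"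
      unfolding s_def .
  qed
qed

lemma EP: obtains K Y where "K > 0" "Y > 0"
  "\<And>y. y \<ge> Y \<Longrightarrow> \<bar>Phi1 m c y\<bar> \<le> K / y^2"
  "\<And>y. y \<ge> Y \<Longrightarrow> real m * gi m c y \<ge> 1"
proof -
  obtain K Y where KY: "K > 0" "Y > 0"
    "\<And>y. y \<ge> Y \<Longrightarrow> \<bar>(\<lambda>s. 1/(FF c s^2*s) + 1/(P1 c s*FF c s*s^2)) (real m * gi m c y)\<bar>
        \<le> K * \<bar>(\<lambda>s. 1/(FF c s^2)) (real m * gi m c y)\<bar>"
    "\<And>y. y \<ge> Y \<Longrightarrow> real m * gi m c y \<ge> 1"
    using transfer[OF asymP[of "real c"]] by auto
  show ?thesis
  proof (rule that[of "real m * K", OF _ KY(2) _ KY(4)])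
    show "real m * K > 0" using m KY(1) by simp
    fix y assume y: "y \<ge> Y"
    define s where "s = real m * gi m c y"
    have s1: "s \<ge> 1" using KY(4)[OF y] s_def by simp
    have yp: "y > 0" using y KY(2) by simp
    have F: "FF c s = real m * y" using sy(1)[OF yp] s_def by simp
    have d: "D1 m c y = 1/P1 c s" by (simp add: D1_def s_def)
    have d2: "D2 m c y = -(real m * P2 s)/P1 c s^3" by (simp add: D2_def s_def)
    have gy: "gi m c y = s / m" using m by (simp add: s_def)
    have yF: "y = FF c s / m" using F m by simp
    have Fp: "FF c s > 0" using F m yp by simp
    have Pp: "P1 c s > 0" using P1_pos[OF m, of s] s1 by simp
    have e1: "Phi1 m c y = - (real m ^ 3 * (1/(FF c s^2*s) + 1/(P1 c s*FF c s*s^2)))"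
      unfolding Phi1_def d gy using m s1 Fp Pp by (subst yF)+ (simp add: field_simps power2_eq_square power3_eq_cube)
    have e2: "\<bar>1/(FF c s^2)\<bar> = 1/((real m * y)^2)" using F yp m s1 by simp
    have q: "\<bar>1/(FF c s^2*s) + 1/(P1 c s*FF c s*s^2)\<bar> \<le> K * \<bar>1/(FF c s^2)\<bar>" using KY(3)[OF y] unfolding s_def by simp
    have "\<bar>Phi1 m c y\<bar> = real m ^ 3 * \<bar>1/(FF c s^2*s) + 1/(P1 c s*FF c s*s^2)\<bar>" using e1 by (simp add: abs_mult)
    also have "\<dots> \<le> real m ^ 3 * (K * \<bar>1/(FF c s^2)\<bar>)" by (rule mult_left_mono[OF q]) simp
    also have "\<dots> = real m ^ 3 * (K / ((real m * y)^2))" using e2 by simp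
    also have "\<dots> = real m * K / y^2" using m by (simp add: power2_eq_square power3_eq_cube)
    finally show "\<bar>Phi1 m c y\<bar> \<le> real m * K / y^2" .
  qed
qed

lemma EL: obtains K Y where "K > 0" "Y > 0"
  "\<And>y. y \<ge> Y \<Longrightarrow> ln y \<le> K * (real m * gi m c y)"
  "\<And>y. y \<ge> Y \<Longrightarrow> real m * gi m c y \<ge> 1"
proof -
  obtain K Y where KY: "K > 0" "Y > 0"
    "\<And>y. y \<ge> Y \<Longrightarrow> \<bar>(\<lambda>s. ln (FF c s)) (real m * gi m c y)\<bar>
        \<le> K * \<bar>(\<lambda>s. s) (real m * gi m c y)\<bar>"
    "\<And>y. y \<ge> Y \<Longrightarrow> real m * gi m c y \<ge> 1"
    using transfer[OF asymL[of "real c"]] by auto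
  show ?thesis
  proof (rule that[OF KY(1,2) _ KY(4)])
    fix y assume y: "y \<ge> Y"
    define s where "s = real m * gi m c y"
    have s1: "s \<ge> 1" using KY(4)[OF y] s_def by simp
    have yp: "y > 0" using y KY(2) by simp
    have F: "FF c s = real m * y" using sy(1)[OF yp] s_def by simp
    have "ln y \<le> ln (real m * y)" using m yp by (subst ln_le_cancel_iff) auto
    also have "\<dots> \<le> K * s" using KY(3)[OF y] F s1 unfolding s_def[symmetric] by simp
    finally show "ln y \<le> K * (real m * gi m c y)" unfolding s_def .
  qed
qed

end

lemma ev_ln: obtains N :: real where "N > 0" "\<forall>x\<ge>N. ln x ^ 2 \<le> x \<and> 1 \<le> ln x"
proof -
  have "eventually (\<lambda>x::real. ln x ^ 2 \<le> x) at_top" by real_asymp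
  moreover have "eventually (\<lambda>x::real. 1 \<le> ln x) at_top" by real_asymp
  moreover have "eventually (\<lambda>x::real. x > 0) at_top" by real_asymp
  ultimately have "eventually (\<lambda>x::real. ln x ^ 2 \<le> x \<and> 1 \<le> ln x \<and> x > 0) at_top"
    by eventually_elim auto
  then obtain N :: real where N: "\<forall>x\<ge>N. ln x ^ 2 \<le> x \<and> 1 \<le> ln x \<and> x > 0"
    unfolding eventually_at_top_linorder by blast
  have NN: "N > 0" using N order_refl by blast
  show ?thesis
  proof (rule that[of N])
    show "N > 0" by (rule NN)
    show "\<forall>x\<ge>N. ln x ^ 2 \<le> x \<and> 1 \<le> ln x" using N by blast
  qed
qed

context
  fixes m c :: nat
  assumes m: "m > 0"
begin

lemma C12: obtains C N where "C > 0" "N > 0"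
  "\<And>x \<xi>. x \<ge> N \<Longrightarrow> x \<le> \<xi> \<Longrightarrow> \<xi> \<le> x + 2 \<Longrightarrow>
     \<bar>D1 m c \<xi> - 1/(real m * x) + 1/((real m)^2 * x * gi m c x)\<bar> \<le> C / (x * ln x ^ 2)"
proof -
  obtain KA YA where A: "KA > 0" "YA > 0"
    "\<And>y. y \<ge> YA \<Longrightarrow> \<bar>D1 m c y - 1/(real m * y) + 1/((real m)^2 * y * gi m c y)\<bar> \<le> KA / (y * (real m * gi m c y)^2)"
    "\<And>y. y \<ge> YA \<Longrightarrow> real m * gi m c y \<ge> 1"
    by (rule EA[OF m, where c=c]) (rule that)
  obtain KP YP where P: "KP > 0" "YP > 0"
    "\<And>y. y \<ge> YP \<Longrightarrow> \<bar>Phi1 m c y\<bar> \<le> KP / y^2"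
    "\<And>y. y \<ge> YP \<Longrightarrow> real m * gi m c y \<ge> 1"
    by (rule EP[OF m, where c=c]) (rule that)
  obtain KL YL where L: "KL > 0" "YL > 0"
    "\<And>y. y \<ge> YL \<Longrightarrow> ln y \<le> KL * (real m * gi m c y)"
    "\<And>y. y \<ge> YL \<Longrightarrow> real m * gi m c y \<ge> 1"
    by (rule EL[OF m, where c=c]) (rule that)
  obtain NL :: real where NL: "NL > 0" "\<forall>x\<ge>NL. ln x ^ 2 \<le> x \<and> 1 \<le> ln x"
    by (rule ev_ln) (rule that)
  define N where "N = max (max YA YP) (max YL NL)"
  define C where "C = KA * KL^2 + 2 + 2 * KP"
  have N1: "YA \<le> N" "YP \<le> N" "YL \<le> N" "NL \<le> N" by (simp_all add: N_def)
  show ?thesis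
  proof (rule that[of C N])
    show "C > 0" using A(1) P(1) L(1) unfolding C_def by (intro add_pos_pos) auto
    show "N > 0" using NL(1) N1(4) by linarith
    fix x \<xi> assume x: "x \<ge> N" and x\<xi>: "x \<le> \<xi>" "\<xi> \<le> x + 2"
    have xp: "x > 0" using x NL(1) N1(4) by linarith
    have \<xi>p: "\<xi> > 0" using xp x\<xi> by linarith
    have "NL \<le> x" using x N1(4) by linarith
    hence lnx: "ln x ^ 2 \<le> x" "1 \<le> ln x" using NL(2) by blast+
    define sx where "sx = real m * gi m c x"
    define s\<xi> where "s\<xi> = real m * gi m c \<xi>"
    have "gi m c x \<le> gi m c \<xi>" by (rule gi_mono[OF m xp x\<xi>(1)])
    hence ssx: "sx \<le> s\<xi>" unfolding sx_def s\<xi>_def by (rule mult_left_mono) simp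
    have lsx: "ln x \<le> KL * sx" unfolding sx_def by (rule L(3)) (use x N1(3) in linarith)
    have "ln x \<le> KL * s\<xi>" using lsx mult_left_mono[OF ssx, of KL] L(1) by linarith
    hence lsx': "ln x / KL \<le> s\<xi>" using L(1) by (simp add: divide_le_eq mult.commute)
    have lnp: "ln x / KL > 0" using lnx L(1) by simp
    have sp: "s\<xi> > 0" using lsx' lnp by linarith
    have T1: "\<bar>D1 m c \<xi> - 1/(real m * \<xi>) + 1/((real m)^2 * \<xi> * gi m c \<xi>)\<bar> \<le> KA * KL^2 / (x * ln x ^ 2)"
    proof -
      have "\<bar>D1 m c \<xi> - 1/(real m * \<xi>) + 1/((real m)^2 * \<xi> * gi m c \<xi>)\<bar> \<le> KA / (\<xi> * s\<xi>^2)"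
        unfolding s\<xi>_def by (rule A(3)) (use x x\<xi> N1(1) in linarith)
      also have "\<dots> \<le> KA / (x * (ln x / KL)^2)"
      proof (rule divide_left_mono)
        show "x * (ln x / KL)^2 \<le> \<xi> * s\<xi>^2"
          by (rule mult_mono) (use x\<xi> lsx' lnp xp in \<open>auto intro: power_mono\<close>)
        show "0 < \<xi> * s\<xi>^2 * (x * (ln x / KL)^2)" using \<xi>p sp xp lnp by (intro mult_pos_pos) auto
    qed (use A(1) in auto)
      also have "\<dots> = KA * KL^2 / (x * ln x ^ 2)" using L(1) by (simp add: power_divide)
      finally show ?thesis .
    qed
    have T2: "\<bar>1/(real m * \<xi>) - 1/(real m * x)\<bar> \<le> 2 / x^2"
    proof -
      have e: "1/(real m * x) - 1/(real m * \<xi>) = (\<xi> - x) / (real m * x * \<xi>)"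
        using m xp \<xi>p by (simp add: field_simps)
      have "(\<xi> - x) / (real m * x * \<xi>) \<le> 2 / (x * x)"
      proof (rule frac_le)
        show "x * x \<le> real m * x * \<xi>"
        proof -
          have "x * x \<le> x * \<xi>" using xp x\<xi> by (simp add: mult_left_mono)
          also have "\<dots> \<le> real m * (x * \<xi>)" using m mult_right_mono[of 1 "real m" "x*\<xi>"] xp \<xi>p by simp
          finally show ?thesis by (simp add: mult.assoc)
        qed
      qed (use x\<xi> xp in auto)
      moreover have "(\<xi> - x) / (real m * x * \<xi>) \<ge> 0" using x\<xi> m xp \<xi>p by simp
      ultimately show ?thesis using e by (simp add: power2_eq_square abs_minus_commute)
    qed
    have T3: "\<bar>1/((real m)^2 * x * gi m c x) - 1/((real m)^2 * \<xi> * gi m c \<xi>)\<bar> \<le> 2 * KP / x^2"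
    proof -
      have ph: "\<bar>Phi m c \<xi> - Phi m c x\<bar> \<le> 2 * KP / x^2"
      proof (cases "x = \<xi>")
        case True then show ?thesis using P(1) by simp
      next
        case False
        hence lt: "x < \<xi>" using x\<xi> by simp
        have "\<exists>z. x < z \<and> z < \<xi> \<and> Phi m c \<xi> - Phi m c x = (\<xi> - x) * Phi1 m c z"
          by (rule MVT2[OF lt]) (rule Phi_deriv[OF m], use xp in linarith)
        then obtain \<zeta> where z: "x < \<zeta>" "\<zeta> < \<xi>" "Phi m c \<xi> - Phi m c x = (\<xi> - x) * Phi1 m c \<zeta>"
          by blast
        have pz: "\<bar>Phi1 m c \<zeta>\<bar> \<le> KP / \<zeta>^2" by (rule P(3)) (use z x N1(2) in linarith)
        have pz2: "KP / \<zeta>^2 \<le> KP / x^2"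
          by (rule divide_left_mono) (use P(1) z xp in \<open>auto intro: power_mono\<close>)
        have "\<bar>Phi m c \<xi> - Phi m c x\<bar> = (\<xi> - x) * \<bar>Phi1 m c \<zeta>\<bar>" using z lt by (simp add: abs_mult)
        also have "\<dots> \<le> 2 * (KP / x^2)"
          by (rule mult_mono) (use x\<xi> lt pz pz2 P(1) in auto)
        finally show ?thesis by simp
      qed
      have e: "1/((real m)^2 * x * gi m c x) - 1/((real m)^2 * \<xi> * gi m c \<xi>)
          = (Phi m c x - Phi m c \<xi>) / (real m)^2"
        using m by (simp add: Phi_def diff_divide_distrib mult_ac)
      have M: "1 \<le> (real m)^2" using m by (simp add: one_le_power)
      have "\<bar>Phi m c x - Phi m c \<xi>\<bar> / (real m)^2 \<le> \<bar>Phi m c x - Phi m c \<xi>\<bar>"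
        using mult_left_mono[OF M, of "\<bar>Phi m c x - Phi m c \<xi>\<bar>"] M by (simp add: divide_le_eq)
      thus ?thesis using e ph by (simp add: abs_minus_commute)
    qed
    have x2: "1 / x^2 \<le> 1 / (x * ln x ^ 2)"
    proof (rule divide_left_mono)
      show "x * ln x ^ 2 \<le> x^2" using lnx xp by (simp add: power2_eq_square mult_left_mono)
      have "ln x > 0" using lnx by linarith
      thus "0 < x ^ 2 * (x * ln x ^ 2)" using xp by (intro mult_pos_pos) auto
    qed simp
    have x2a: "2 / x^2 \<le> 2 / (x * ln x ^ 2)" using mult_left_mono[OF x2, of 2] by simp
    have x2b: "2 * KP / x^2 \<le> 2 * KP / (x * ln x ^ 2)" using mult_left_mono[OF x2, of "2*KP"] P(1) by simp
    have "\<bar>D1 m c \<xi> - 1/(real m * x) + 1/((real m)^2 * x * gi m c x)\<bar> \<le>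
      \<bar>D1 m c \<xi> - 1/(real m * \<xi>) + 1/((real m)^2 * \<xi> * gi m c \<xi>)\<bar> + \<bar>1/(real m * \<xi>) - 1/(real m * x)\<bar>
      + \<bar>1/((real m)^2 * x * gi m c x) - 1/((real m)^2 * \<xi> * gi m c \<xi>)\<bar>"
    proof -
      define a where "a = D1 m c \<xi> - 1/(real m * \<xi>) + 1/((real m)^2 * \<xi> * gi m c \<xi>)"
      define b where "b = 1/(real m * \<xi>) - 1/(real m * x)"
      define d where "d = 1/((real m)^2 * x * gi m c x) - 1/((real m)^2 * \<xi> * gi m c \<xi>)"
      have eq: "D1 m c \<xi> - 1/(real m * x) + 1/((real m)^2 * x * gi m c x) = a + b + d"
        unfolding a_def b_def d_def by simp
      have "\<bar>a + b + d\<bar> \<le> \<bar>a\<bar> + \<bar>b\<bar> + \<bar>d\<bar>"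
        using abs_triangle_ineq[of a b] abs_triangle_ineq[of "a+b" d] by linarith
      hence "\<bar>D1 m c \<xi> - 1/(real m * x) + 1/((real m)^2 * x * gi m c x)\<bar> \<le> \<bar>a\<bar> + \<bar>b\<bar> + \<bar>d\<bar>"
        unfolding eq .
      thus ?thesis unfolding a_def b_def d_def .
    qed
    also have "\<dots> \<le> KA * KL^2 / (x * ln x ^ 2) + 2 / (x * ln x ^ 2) + 2 * KP / (x * ln x ^ 2)"
      using T1 T2 T3 x2a x2b by linarith
    also have "\<dots> = C / (x * ln x ^ 2)" by (simp add: C_def add_divide_distrib)
    finally show "\<bar>D1 m c \<xi> - 1/(real m * x) + 1/((real m)^2 * x * gi m c x)\<bar> \<le> C / (x * ln x ^ 2)" .
  qed
qed

lemma C3: obtains C N where "C > 0" "N > 0"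
  "\<And>x \<xi>. x \<ge> N \<Longrightarrow> x \<le> \<xi> \<Longrightarrow> \<xi> \<le> x + 2 \<Longrightarrow>
     \<bar>- D2 m c \<xi> - 1/(real m * x^2)\<bar> \<le> C / (x^2 * ln x)"
proof -
  obtain KB YB where B: "KB > 0" "YB > 0"
    "\<And>y. y \<ge> YB \<Longrightarrow> \<bar>D2 m c y + 1/(real m * y^2)\<bar> \<le> KB / (y^2 * (real m * gi m c y))"
    "\<And>y. y \<ge> YB \<Longrightarrow> real m * gi m c y \<ge> 1"
    by (rule EB[OF m, where c=c]) (rule that)
  obtain KL YL where L: "KL > 0" "YL > 0"
    "\<And>y. y \<ge> YL \<Longrightarrow> ln y \<le> KL * (real m * gi m c y)"
    "\<And>y. y \<ge> YL \<Longrightarrow> real m * gi m c y \<ge> 1"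
    by (rule EL[OF m, where c=c]) (rule that)
  obtain NL :: real where NL: "NL > 0" "\<forall>x\<ge>NL. ln x ^ 2 \<le> x \<and> 1 \<le> ln x"
    by (rule ev_ln) (rule that)
  define N where "N = max (max YB YL) NL"
  define C where "C = KB * KL + 8"
  have N1: "YB \<le> N" "YL \<le> N" "NL \<le> N" by (simp_all add: N_def)
  show ?thesis
  proof (rule that[of C N])
    show "C > 0" using B(1) L(1) unfolding C_def by (intro add_pos_pos) auto
    show "N > 0" using NL(1) N1(3) by linarith
    fix x \<xi> assume x: "x \<ge> N" and x\<xi>: "x \<le> \<xi>" "\<xi> \<le> x + 2"
    have xp: "x > 0" using x NL(1) N1(3) by linarith
    have \<xi>p: "\<xi> > 0" using xp x\<xi> by linarith
    have "NL \<le> x" using x N1(3) by linarith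
    hence lnx: "ln x ^ 2 \<le> x" "1 \<le> ln x" using NL(2) by blast+
    have x1: "x \<ge> 1" using lnx(2) ln_le_minus_one[OF xp] by linarith
    define sx where "sx = real m * gi m c x"
    define s\<xi> where "s\<xi> = real m * gi m c \<xi>"
    have "gi m c x \<le> gi m c \<xi>" by (rule gi_mono[OF m xp x\<xi>(1)])
    hence ssx: "sx \<le> s\<xi>" unfolding sx_def s\<xi>_def by (rule mult_left_mono) simp
    have lsx: "ln x \<le> KL * sx" unfolding sx_def by (rule L(3)) (use x N1(2) in linarith)
    have "ln x \<le> KL * s\<xi>" using lsx mult_left_mono[OF ssx, of KL] L(1) by linarith
    hence lsx': "ln x / KL \<le> s\<xi>" using L(1) by (simp add: divide_le_eq mult.commute)
    have lnp: "ln x / KL > 0" using lnx L(1) by simp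
    have sp: "s\<xi> > 0" using lsx' lnp by linarith
    have T1: "\<bar>D2 m c \<xi> + 1/(real m * \<xi>^2)\<bar> \<le> KB * KL / (x^2 * ln x)"
    proof -
      have "\<bar>D2 m c \<xi> + 1/(real m * \<xi>^2)\<bar> \<le> KB / (\<xi>^2 * s\<xi>)"
        unfolding s\<xi>_def by (rule B(3)) (use x x\<xi> N1(1) in linarith)
      also have "\<dots> \<le> KB / (x^2 * (ln x / KL))"
      proof (rule divide_left_mono)
        show "x^2 * (ln x / KL) \<le> \<xi>^2 * s\<xi>"
          by (rule mult_mono) (use x\<xi> lsx' lnp xp in \<open>auto intro: power_mono\<close>)
        show "0 < \<xi>^2 * s\<xi> * (x^2 * (ln x / KL))" using \<xi>p sp xp lnp by (intro mult_pos_pos) auto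
    qed (use B(1) in auto)
      also have "\<dots> = KB * KL / (x^2 * ln x)" using L(1) by simp
      finally show ?thesis .
    qed
    have T2: "\<bar>1/(real m * \<xi>^2) - 1/(real m * x^2)\<bar> \<le> 8 / x^3"
    proof -
      have e: "1/(real m * x^2) - 1/(real m * \<xi>^2) = (\<xi> - x) * (\<xi> + x) / (real m * x^2 * \<xi>^2)"
        using m xp \<xi>p by (simp add: field_simps power2_eq_square)
      have "(\<xi> - x) * (\<xi> + x) / (real m * x^2 * \<xi>^2) \<le> (2 * (4 * x)) / (x^3 * x)"
      proof (rule frac_le)
        show "(\<xi> - x) * (\<xi> + x) \<le> 2 * (4 * x)"
          by (rule mult_mono) (use x\<xi> x1 in auto)
        show "x^3 * x \<le> real m * x^2 * \<xi>^2"
        proof -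
          have "x^3 * x = 1 * x^2 * x^2" by (simp add: power2_eq_square power3_eq_cube)
          also have "\<dots> \<le> real m * x^2 * \<xi>^2"
            by (intro mult_mono power_mono) (use m x\<xi> xp in auto)
          finally show ?thesis .
        qed
      qed (use x\<xi> xp in auto)
      also have "\<dots> = 8 / x^3" using xp by (simp add: field_simps)
      finally have "(\<xi> - x) * (\<xi> + x) / (real m * x^2 * \<xi>^2) \<le> 8 / x^3" .
      moreover have "(\<xi> - x) * (\<xi> + x) / (real m * x^2 * \<xi>^2) \<ge> 0" using x\<xi> m xp \<xi>p by simp
      ultimately show ?thesis using e by (simp add: abs_minus_commute)
    qed
    have x3: "8 / x^3 \<le> 8 / (x^2 * ln x)"
    proof (rule divide_left_mono)
      have "ln x \<le> ln x ^ 2" using lnx(2) by (simp add: power2_eq_square)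
      hence "ln x \<le> x" using lnx(1) by linarith
      thus "x^2 * ln x \<le> x^3" using xp by (simp add: power3_eq_cube power2_eq_square mult_left_mono)
      have "x > 1" using lnx(2) ln_le_minus_one[OF xp] by linarith
      thus "0 < x ^ 3 * (x^2 * ln x)" using xp by (intro mult_pos_pos) auto
    qed simp
    have "\<bar>- D2 m c \<xi> - 1/(real m * x^2)\<bar> \<le> \<bar>D2 m c \<xi> + 1/(real m * \<xi>^2)\<bar> + \<bar>1/(real m * \<xi>^2) - 1/(real m * x^2)\<bar>"
    proof -
      define a where "a = D2 m c \<xi> + 1/(real m * \<xi>^2)"
      define b where "b = 1/(real m * \<xi>^2) - 1/(real m * x^2)"
      have eq: "- D2 m c \<xi> - 1/(real m * x^2) = - a + b" unfolding a_def b_def by simp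
      have "\<bar>- a + b\<bar> \<le> \<bar>a\<bar> + \<bar>b\<bar>" using abs_triangle_ineq[of "-a" b] by simp
      hence "\<bar>- D2 m c \<xi> - 1/(real m * x^2)\<bar> \<le> \<bar>a\<bar> + \<bar>b\<bar>" unfolding eq .
      thus ?thesis unfolding a_def b_def .
    qed
    also have "\<dots> \<le> KB * KL / (x^2 * ln x) + 8 / (x^2 * ln x)" using T1 T2 x3 by linarith
    also have "\<dots> = C / (x^2 * ln x)" by (simp add: C_def add_divide_distrib)
    finally show "\<bar>- D2 m c \<xi> - 1/(real m * x^2)\<bar> \<le> C / (x^2 * ln x)" .
  qed
qed

lemma C4: obtains C N where "C > 0" "N > 0"
  "\<And>x \<xi>. x \<ge> N \<Longrightarrow> x \<le> \<xi> \<Longrightarrow> \<xi> \<le> x + 2 \<Longrightarrow>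
     \<bar>H2 m c \<xi>\<bar> \<le> C / (x^2 * ln x ^ 2)"
proof -
  obtain KH YH where H: "KH > 0" "YH > 0"
    "\<And>y. y \<ge> YH \<Longrightarrow> \<bar>H2 m c y\<bar> \<le> KH / (y^2 * (real m * gi m c y)^2)"
    "\<And>y. y \<ge> YH \<Longrightarrow> real m * gi m c y \<ge> 1"
    by (rule EH[OF m, where c=c]) (rule that)
  obtain KL YL where L: "KL > 0" "YL > 0"
    "\<And>y. y \<ge> YL \<Longrightarrow> ln y \<le> KL * (real m * gi m c y)"
    "\<And>y. y \<ge> YL \<Longrightarrow> real m * gi m c y \<ge> 1"
    by (rule EL[OF m, where c=c]) (rule that)
  obtain NL :: real where NL: "NL > 0" "\<forall>x\<ge>NL. ln x ^ 2 \<le> x \<and> 1 \<le> ln x"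
    by (rule ev_ln) (rule that)
  define N where "N = max (max YH YL) NL"
  define C where "C = KH * KL^2"
  have N1: "YH \<le> N" "YL \<le> N" "NL \<le> N" by (simp_all add: N_def)
  show ?thesis
  proof (rule that[of C N])
    show "C > 0" using H(1) L(1) unfolding C_def by simp
    show "N > 0" using NL(1) N1(3) by linarith
    fix x \<xi> assume x: "x \<ge> N" and x\<xi>: "x \<le> \<xi>" "\<xi> \<le> x + 2"
    have xp: "x > 0" using x NL(1) N1(3) by linarith
    have \<xi>p: "\<xi> > 0" using xp x\<xi> by linarith
    have "NL \<le> x" using x N1(3) by linarith
    hence lnx: "ln x ^ 2 \<le> x" "1 \<le> ln x" using NL(2) by blast+
    define sx where "sx = real m * gi m c x"
    define s\<xi> where "s\<xi> = real m * gi m c \<xi>"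
    have "gi m c x \<le> gi m c \<xi>" by (rule gi_mono[OF m xp x\<xi>(1)])
    hence ssx: "sx \<le> s\<xi>" unfolding sx_def s\<xi>_def by (rule mult_left_mono) simp
    have lsx: "ln x \<le> KL * sx" unfolding sx_def by (rule L(3)) (use x N1(2) in linarith)
    have "ln x \<le> KL * s\<xi>" using lsx mult_left_mono[OF ssx, of KL] L(1) by linarith
    hence lsx': "ln x / KL \<le> s\<xi>" using L(1) by (simp add: divide_le_eq mult.commute)
    have lnp: "ln x / KL > 0" using lnx L(1) by simp
    have sp: "s\<xi> > 0" using lsx' lnp by linarith
    have "\<bar>H2 m c \<xi>\<bar> \<le> KH / (\<xi>^2 * s\<xi>^2)"
      unfolding s\<xi>_def by (rule H(3)) (use x x\<xi> N1(1) in linarith)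
    also have "\<dots> \<le> KH / (x^2 * (ln x / KL)^2)"
    proof (rule divide_left_mono)
      show "x^2 * (ln x / KL)^2 \<le> \<xi>^2 * s\<xi>^2"
        by (rule mult_mono) (use x\<xi> lsx' lnp xp in \<open>auto intro: power_mono\<close>)
      show "0 < \<xi>^2 * s\<xi>^2 * (x^2 * (ln x / KL)^2)" using \<xi>p sp xp lnp by (intro mult_pos_pos) auto
    qed (use H(1) in auto)
    also have "\<dots> = C / (x^2 * ln x ^ 2)" using L(1) by (simp add: C_def power_divide)
    finally show "\<bar>H2 m c \<xi>\<bar> \<le> C / (x^2 * ln x ^ 2)" .
  qed
qed

end

lemma bound_norm: fixes a C y :: real assumes "C > 0" "a \<le> C / y" shows "a \<le> C * norm (1 / y)"
proof -
  have "C / y = C * (1 / y)" by simp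
  also have "\<dots> \<le> C * \<bar>1/y\<bar>" by (rule mult_left_mono[OF abs_ge_self]) (use assms(1) in simp)
  finally show ?thesis using assms(2) by simp
qed

theorem lemma5:
  fixes m c :: nat
  assumes "m > 0"
  defines "t0 \<equiv> tt m c 0" and "t1 \<equiv> tt m c 1" and "t2 \<equiv> tt m c 2"
  shows "((\<lambda>n. (t1 n - t0 n) - (1 / (real m * real n) - 1 / ((real m)^2 * real n * t0 n)))
           \<in> O(\<lambda>n. 1 / (real n * (ln (real n))^2))) \<and>
         ((\<lambda>n. (t2 n - t1 n) - (1 / (real m * real n) - 1 / ((real m)^2 * real n * t0 n)))
           \<in> O(\<lambda>n. 1 / (real n * (ln (real n))^2))) \<and>
         ((\<lambda>n. (2 * t1 n - t0 n - t2 n) - 1 / (real m * (real n)^2))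
           \<in> O(\<lambda>n. 1 / ((real n)^2 * ln (real n)))) \<and>
         ((\<lambda>n. 1 / t0 n + 1 / t2 n - 2 / t1 n)
           \<in> O(\<lambda>n. 1 / ((real n)^2 * (ln (real n))^2)))"
proof -
  have m: "m > 0" by fact
  have T0: "t0 n = gi m c (real n)" for n unfolding t0_def by (simp add: tt_gi)
  have T1: "t1 n = gi m c (real n + 1)" for n unfolding t1_def by (simp add: tt_gi)
  have T2: "t2 n = gi m c (real n + 2)" for n unfolding t2_def by (simp add: tt_gi)
  obtain C1 N1 where K1: "C1 > 0" "N1 > 0"
    "\<And>x \<xi>. x \<ge> N1 \<Longrightarrow> x \<le> \<xi> \<Longrightarrow> \<xi> \<le> x + 2 \<Longrightarrow>
     \<bar>D1 m c \<xi> - 1/(real m * x) + 1/((real m)^2 * x * gi m c x)\<bar> \<le> C1 / (x * ln x ^ 2)"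
    by (rule C12[OF m, where c=c]) (rule that)
  obtain C3 N3 where K3: "C3 > 0" "N3 > 0"
    "\<And>x \<xi>. x \<ge> N3 \<Longrightarrow> x \<le> \<xi> \<Longrightarrow> \<xi> \<le> x + 2 \<Longrightarrow>
     \<bar>- D2 m c \<xi> - 1/(real m * x^2)\<bar> \<le> C3 / (x^2 * ln x)"
    by (rule C3[OF m, where c=c]) (rule that)
  obtain C4 N4 where K4: "C4 > 0" "N4 > 0"
    "\<And>x \<xi>. x \<ge> N4 \<Longrightarrow> x \<le> \<xi> \<Longrightarrow> \<xi> \<le> x + 2 \<Longrightarrow>
     \<bar>H2 m c \<xi>\<bar> \<le> C4 / (x^2 * ln x ^ 2)"
    by (rule C4[OF m, where c=c]) (rule that)
  define N where "N = max (max N1 N3) N4"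
  have NN: "N1 \<le> N" "N3 \<le> N" "N4 \<le> N" "N > 0" using K1(2) by (auto simp: N_def)
  have evN: "eventually (\<lambda>n. N \<le> real n) sequentially"
    using filterlim_real_sequentially unfolding filterlim_at_top by blast
  have c1: "(\<lambda>n. (t1 n - t0 n) - (1 / (real m * real n) - 1 / ((real m)^2 * real n * t0 n)))
           \<in> O(\<lambda>n. 1 / (real n * (ln (real n))^2))"
  proof (rule bigoI[where c=C1])
    show "eventually (\<lambda>n. norm ((t1 n - t0 n) - (1 / (real m * real n) - 1 / ((real m)^2 * real n * t0 n)))
       \<le> C1 * norm (1 / (real n * (ln (real n))^2))) sequentially"
      using evN
    proof eventually_elim
      case (elim n)
      define x where "x = real n"
      have xp: "x > 0" using elim NN unfolding x_def by linarith
      have lt: "x < x + 1" by simp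
      have "\<exists>z. x < z \<and> z < x + 1 \<and> gi m c (x+1) - gi m c x = (x + 1 - x) * D1 m c z"
        by (rule MVT2[OF lt]) (rule gi_deriv'[OF m], use xp in linarith)
      then obtain \<xi> where z: "x < \<xi>" "\<xi> < x + 1" "gi m c (x+1) - gi m c x = D1 m c \<xi>" by auto
      have b: "\<bar>D1 m c \<xi> - 1/(real m * x) + 1/((real m)^2 * x * gi m c x)\<bar> \<le> C1 / (x * ln x ^ 2)"
        by (rule K1(3)) (use z elim NN x_def in linarith)+
      have eq: "(t1 n - t0 n) - (1 / (real m * real n) - 1 / ((real m)^2 * real n * t0 n))
          = D1 m c \<xi> - 1/(real m * x) + 1/((real m)^2 * x * gi m c x)"
        unfolding T0 T1 x_def[symmetric] z(3)[symmetric] by simp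
      note fin = bound_norm[OF K1(1) b]
      show ?case using fin eq unfolding x_def by simp
    qed
  qed
  have c2: "(\<lambda>n. (t2 n - t1 n) - (1 / (real m * real n) - 1 / ((real m)^2 * real n * t0 n)))
           \<in> O(\<lambda>n. 1 / (real n * (ln (real n))^2))"
  proof (rule bigoI[where c=C1])
    show "eventually (\<lambda>n. norm ((t2 n - t1 n) - (1 / (real m * real n) - 1 / ((real m)^2 * real n * t0 n)))
       \<le> C1 * norm (1 / (real n * (ln (real n))^2))) sequentially"
      using evN
    proof eventually_elim
      case (elim n)
      define x where "x = real n"
      have xp: "x > 0" using elim NN unfolding x_def by linarith
      have lt: "x + 1 < x + 2" by simp
      have "\<exists>z. x + 1 < z \<and> z < x + 2 \<and> gi m c (x+2) - gi m c (x+1) = (x + 2 - (x + 1)) * D1 m c z"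
        by (rule MVT2[OF lt]) (rule gi_deriv'[OF m], use xp in linarith)
      then obtain \<xi> where z: "x + 1 < \<xi>" "\<xi> < x + 2" "gi m c (x+2) - gi m c (x+1) = D1 m c \<xi>" by auto
      have b: "\<bar>D1 m c \<xi> - 1/(real m * x) + 1/((real m)^2 * x * gi m c x)\<bar> \<le> C1 / (x * ln x ^ 2)"
        by (rule K1(3)) (use z elim NN x_def in linarith)+
      have eq: "(t2 n - t1 n) - (1 / (real m * real n) - 1 / ((real m)^2 * real n * t0 n))
          = D1 m c \<xi> - 1/(real m * x) + 1/((real m)^2 * x * gi m c x)"
        unfolding T0 T1 T2 x_def[symmetric] z(3)[symmetric] by simp
      note fin = bound_norm[OF K1(1) b]
      show ?case using fin eq unfolding x_def by simp
    qed
  qed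
  have c3: "(\<lambda>n. (2 * t1 n - t0 n - t2 n) - 1 / (real m * (real n)^2))
           \<in> O(\<lambda>n. 1 / ((real n)^2 * ln (real n)))"
  proof (rule bigoI[where c=C3])
    show "eventually (\<lambda>n. norm ((2 * t1 n - t0 n - t2 n) - 1 / (real m * (real n)^2))
       \<le> C3 * norm (1 / ((real n)^2 * ln (real n)))) sequentially"
      using evN
    proof eventually_elim
      case (elim n)
      define x where "x = real n"
      have xp: "x > 0" using elim NN unfolding x_def by linarith
      have "\<exists>\<xi>. x < \<xi> \<and> \<xi> < x+2 \<and> gi m c (x+2) - 2*gi m c (x+1) + gi m c x = D2 m c \<xi>"
      proof (rule second_diff)
        fix z assume "x \<le> z" "z \<le> x + 2"
        hence zp: "z > 0" using xp by linarith
        show "DERIV (gi m c) z :> D1 m c z" by (rule gi_deriv'[OF m zp])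
        show "DERIV (D1 m c) z :> D2 m c z" by (rule D1_deriv[OF m zp])
      qed
      then obtain \<xi> where z: "x < \<xi>" "\<xi> < x + 2" "gi m c (x+2) - 2*gi m c (x+1) + gi m c x = D2 m c \<xi>" by auto
      have b: "\<bar>- D2 m c \<xi> - 1/(real m * x^2)\<bar> \<le> C3 / (x^2 * ln x)"
        by (rule K3(3)) (use z elim NN x_def in linarith)+
      have eq: "(2 * t1 n - t0 n - t2 n) - 1 / (real m * (real n)^2) = - D2 m c \<xi> - 1/(real m * x^2)"
        unfolding T0 T1 T2 x_def[symmetric] z(3)[symmetric] by simp
      note fin = bound_norm[OF K3(1) b]
      show ?case using fin eq unfolding x_def by simp
    qed
  qed
  have c4: "(\<lambda>n. 1 / t0 n + 1 / t2 n - 2 / t1 n)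
           \<in> O(\<lambda>n. 1 / ((real n)^2 * (ln (real n))^2))"
  proof (rule bigoI[where c=C4])
    show "eventually (\<lambda>n. norm (1 / t0 n + 1 / t2 n - 2 / t1 n)
       \<le> C4 * norm (1 / ((real n)^2 * (ln (real n))^2))) sequentially"
      using evN
    proof eventually_elim
      case (elim n)
      define x where "x = real n"
      have xp: "x > 0" using elim NN unfolding x_def by linarith
      have "\<exists>\<xi>. x < \<xi> \<and> \<xi> < x+2 \<and> (\<lambda>y. 1 / gi m c y) (x+2) - 2*(\<lambda>y. 1 / gi m c y) (x+1) + (\<lambda>y. 1 / gi m c y) x = H2 m c \<xi>"
      proof (rule second_diff)
        fix z assume "x \<le> z" "z \<le> x + 2"
        hence zp: "z > 0" using xp by linarith
        show "DERIV (\<lambda>y. 1 / gi m c y) z :> H1 m c z" by (rule H_deriv[OF m zp])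
        show "DERIV (H1 m c) z :> H2 m c z" by (rule H1_deriv[OF m zp])
      qed
      then obtain \<xi> where z: "x < \<xi>" "\<xi> < x + 2" "1 / gi m c (x+2) - 2*(1 / gi m c (x+1)) + 1 / gi m c x = H2 m c \<xi>" by auto
      have b: "\<bar>H2 m c \<xi>\<bar> \<le> C4 / (x^2 * ln x ^ 2)"
        by (rule K4(3)) (use z elim NN x_def in linarith)+
      have eq: "1 / t0 n + 1 / t2 n - 2 / t1 n = H2 m c \<xi>"
        unfolding T0 T1 T2 x_def[symmetric] z(3)[symmetric] by simp
      note fin = bound_norm[OF K4(1) b]
      show ?case using fin eq unfolding x_def by simp
    qed
  qed
  show ?thesis using c1 c2 c3 c4 by blast
qed

end
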